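(* Let $m\ge2$, $n\ge1$, and let $\alpha:(\mathbb Z[1/m],+)\to U_n(\mathbb Z[1/m])$ be an injective group homomorphism, with image $H=\alpha(\mathbb Z[1/m])$. Then the isolator $I(H)=\{g\in U_n(\mathbb Z[1/m]): g^k\in H\text{ for some integer }k\ge1\}$ is an abelian subgroup of $U_n(\mathbb Z[1/m])$, and the quotient group $I(H)/H$ has finite exponent.
   Context: $U_n(\mathbb Z[1/m])$ denotes the group of upper triangular $n\times n$ matrices with entries in $\mathbb Z[1/m]$ and all diagonal entries equal to $1$. *)

theory Defs
  imports "Jordan_Normal_Form.Matrix" "HOL-Algebra.Group"
begin

definition Zinv :: "nat \<Rightarrow> rat set" where
  "Zinv m = {q. \<exists>a::int. \<exists>k::nat. q = of_int a / of_nat m ^ k}"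

definition Unitri :: "nat \<Rightarrow> nat \<Rightarrow> rat mat set" where
  "Unitri n m = {A \<in> carrier_mat n n.
      (\<forall>i<n. \<forall>j<n. A $$ (i,j) \<in> Zinv m) \<and>
      (\<forall>i<n. A $$ (i,i) = 1) \<and>
      (\<forall>i<n. \<forall>j<n. j < i \<longrightarrow> A $$ (i,j) = 0)}"

definition Ugroup :: "nat \<Rightarrow> nat \<Rightarrow> rat mat monoid" where
  "Ugroup n m = \<lparr>carrier = Unitri n m, mult = (*), one = 1\<^sub>m n\<rparr>"

definition Zadd :: "nat \<Rightarrow> rat monoid" where
  "Zadd m = \<lparr>carrier = Zinv m, mult = (+), one = 0\<rparr>"

definition isolator :: "nat \<Rightarrow> nat \<Rightarrow> rat mat set \<Rightarrow> rat mat set" where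
  "isolator n m H = {g \<in> Unitri n m. \<exists>k::nat. k \<ge> 1 \<and> g [^]\<^bsub>Ugroup n m\<^esub> k \<in> H}"

end

theory Submission imports Defs "Jordan_Normal_Form.Determinant" begin

lemma Zinv_int: "of_int a \<in> Zinv m"
  unfolding Zinv_def by (rule CollectI, rule exI[of _ a], rule exI[of _ 0], simp)

lemma Zinv_add: assumes "m > 0" "x \<in> Zinv m" "y \<in> Zinv m" shows "x + y \<in> Zinv m"
proof -
  obtain a k where x: "x = of_int a / of_nat m ^ k" using assms unfolding Zinv_def by auto
  obtain b l where y: "y = of_int b / of_nat m ^ l" using assms unfolding Zinv_def by auto
  have "x + y = of_int (a * int m ^ l + b * int m ^ k) / of_nat m ^ (k + l)"
    using assms(1) unfolding x y by (simp add: field_simps power_add)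
  thus ?thesis unfolding Zinv_def by blast
qed

lemma Zinv_mult: assumes "x \<in> Zinv m" "y \<in> Zinv m" shows "x * y \<in> Zinv m"
proof -
  obtain a k where x: "x = of_int a / of_nat m ^ k" using assms unfolding Zinv_def by auto
  obtain b l where y: "y = of_int b / of_nat m ^ l" using assms unfolding Zinv_def by auto
  have "x * y = of_int (a * b) / of_nat m ^ (k + l)"
    unfolding x y by (simp add: power_add)
  thus ?thesis unfolding Zinv_def by blast
qed

lemma Zinv_uminus: assumes "x \<in> Zinv m" shows "- x \<in> Zinv m"
proof -
  obtain a k where x: "x = of_int a / of_nat m ^ k" using assms unfolding Zinv_def by auto
  have "- x = of_int (- a) / of_nat m ^ k" unfolding x by simp
  thus ?thesis unfolding Zinv_def by blast
qed

lemma Zinv_diff: assumes "m > 0" "x \<in> Zinv m" "y \<in> Zinv m" shows "x - y \<in> Zinv m"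
  using Zinv_add[OF assms(1,2) Zinv_uminus[OF assms(3)]] by simp

lemma Zinv_sum: assumes "m > 0" "\<And>i. i \<in> S \<Longrightarrow> f i \<in> Zinv m" shows "sum f S \<in> Zinv m"
  using assms(2)
proof (induction S rule: infinite_finite_induct)
  case (infinite A) then show ?case using Zinv_int[of 0] by simp
next
  case empty then show ?case using Zinv_int[of 0] by simp
next
  case (insert x F) then show ?case using Zinv_add[OF assms(1)] by simp
qed

lemma Zinv_inv_pow: "1 / of_nat m ^ k \<in> Zinv m"
  unfolding Zinv_def by (rule CollectI, rule exI[of _ 1], rule exI[of _ k], simp)

definition ut :: "nat \<Rightarrow> rat mat \<Rightarrow> bool" where
  "ut n X \<longleftrightarrow> X \<in> carrier_mat n n \<and> (\<forall>i<n. X $$ (i,i) = 1) \<and>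
      (\<forall>i<n. \<forall>j<n. j < i \<longrightarrow> X $$ (i,j) = 0)"

definition agree :: "nat \<Rightarrow> nat \<Rightarrow> rat mat \<Rightarrow> rat mat \<Rightarrow> bool" where
  "agree n d X Y \<longleftrightarrow> (\<forall>i<n. \<forall>j<n. j < i + d \<longrightarrow> X $$ (i,j) = Y $$ (i,j))"

lemma mult_entry: assumes "X \<in> carrier_mat n n" "Y \<in> carrier_mat n n" "i < n" "j < n"
  shows "(X * Y) $$ (i,j) = (\<Sum>l<n. X $$ (i,l) * Y $$ (l,j))"
  using assms by (simp add: scalar_prod_def lessThan_atLeast0)

lemma ut_entry: assumes "ut n X" "ut n Y" "i < j" "j < n"
  shows "(X * Y) $$ (i,j) = X $$ (i,j) + Y $$ (i,j) + (\<Sum>l\<in>{i<..<j}. X $$ (i,l) * Y $$ (l,j))"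
proof -
  have c: "X \<in> carrier_mat n n" "Y \<in> carrier_mat n n" using assms unfolding ut_def by auto
  have "(X * Y) $$ (i,j) = (\<Sum>l<n. X $$ (i,l) * Y $$ (l,j))" using mult_entry[OF c] assms by auto
  also have "\<dots> = (\<Sum>l\<in>{i..j}. X $$ (i,l) * Y $$ (l,j))"
  proof (rule sum.mono_neutral_right)
    show "\<forall>l\<in>{..<n} - {i..j}. X $$ (i, l) * Y $$ (l, j) = 0"
      using assms unfolding ut_def by auto
  qed (use assms in auto)
  also have "{i..j} = insert i (insert j {i<..<j})" using assms by auto
  also have "(\<Sum>l\<in>insert i (insert j {i<..<j}). X $$ (i,l) * Y $$ (l,j))
     = X $$ (i,i) * Y $$ (i,j) + (X $$ (i,j) * Y $$ (j,j) + (\<Sum>l\<in>{i<..<j}. X $$ (i,l) * Y $$ (l,j)))"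
    using assms by simp
  finally show ?thesis using assms unfolding ut_def by auto
qed

lemma ut_mult: assumes "ut n X" "ut n Y" shows "ut n (X * Y)"
proof -
  have c: "X \<in> carrier_mat n n" "Y \<in> carrier_mat n n" using assms unfolding ut_def by auto
  have d: "(X*Y) $$ (i,i) = 1" if "i < n" for i
  proof -
    have "(X*Y) $$ (i,i) = (\<Sum>l<n. X $$ (i,l) * Y $$ (l,i))" using mult_entry[OF c] that by auto
    also have "\<dots> = (\<Sum>l\<in>{i}. X $$ (i,l) * Y $$ (l,i))"
    proof (rule sum.mono_neutral_right)
      show "\<forall>l\<in>{..<n} - {i}. X $$ (i, l) * Y $$ (l, i) = 0"
      proof
        fix l assume l: "l \<in> {..<n} - {i}"
        show "X $$ (i, l) * Y $$ (l, i) = 0"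
        proof (cases "l < i")
          case True then show ?thesis using assms l that by (auto simp: ut_def)
        next
          case False then have "i < l" using l by auto
          then show ?thesis using assms l that by (auto simp: ut_def)
        qed
      qed
    qed (use that in auto)
    finally show ?thesis using assms that by (auto simp: ut_def)
  qed
  have l: "(X*Y) $$ (i,j) = 0" if "i < n" "j < n" "j < i" for i j
  proof -
    have "(X*Y) $$ (i,j) = (\<Sum>l<n. X $$ (i,l) * Y $$ (l,j))" using mult_entry[OF c] that by auto
    also have "\<dots> = 0"
    proof (rule sum.neutral, rule ballI)
      fix l assume l: "l \<in> {..<n}"
      show "X $$ (i, l) * Y $$ (l, j) = 0"
      proof (cases "l < i")
        case True then show ?thesis using assms l that by (auto simp: ut_def)
      next
        case False then have "j < l" using that by auto
        then show ?thesis using assms l that by (auto simp: ut_def)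
      qed
    qed
    finally show ?thesis .
  qed
  show ?thesis using c d l unfolding ut_def by auto
qed

lemma ut_one: "ut n (1\<^sub>m n)" unfolding ut_def by auto

lemma Ugroup_one[simp]: "\<one>\<^bsub>Ugroup n m\<^esub> = 1\<^sub>m n" by (simp add: Ugroup_def)
lemma Ugroup_mult[simp]: "x \<otimes>\<^bsub>Ugroup n m\<^esub> y = x * y" by (simp add: Ugroup_def)
lemma Ugroup_carrier[simp]: "carrier (Ugroup n m) = Unitri n m" by (simp add: Ugroup_def)

lemma pw_0[simp]: "X [^]\<^bsub>Ugroup n m\<^esub> (0::nat) = 1\<^sub>m n"
  by (simp add: Ugroup_def)

lemma pw_Suc[simp]: "X [^]\<^bsub>Ugroup n m\<^esub> (Suc k) = X [^]\<^bsub>Ugroup n m\<^esub> k * X"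
  by (simp add: Ugroup_def)

lemma prod_diff:
  assumes u: "ut n X" "ut n Y" "ut n X'" "ut n Y'" and a: "agree n d X X'" "agree n d Y Y'"
  shows "agree n d (X*Y) (X'*Y')"
    "\<And>i. i + d < n \<Longrightarrow> 0 < d \<Longrightarrow> (X*Y)$$(i,i+d) - (X'*Y')$$(i,i+d)
        = (X$$(i,i+d) - X'$$(i,i+d)) + (Y$$(i,i+d) - Y'$$(i,i+d))"
proof -
  have core: "(X*Y)$$(i,j) - (X'*Y')$$(i,j) = (X$$(i,j) - X'$$(i,j)) + (Y$$(i,j) - Y'$$(i,j))"
    if ij: "i < j" "j < n" "j \<le> i + d" for i j
  proof -
    have s: "(\<Sum>l\<in>{i<..<j}. X $$ (i,l) * Y $$ (l,j)) = (\<Sum>l\<in>{i<..<j}. X' $$ (i,l) * Y' $$ (l,j))"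
    proof (rule sum.cong)
      fix l assume l: "l \<in> {i<..<j}"
      have "X $$ (i,l) = X' $$ (i,l)" using a(1) l ij unfolding agree_def by auto
      moreover have "Y $$ (l,j) = Y' $$ (l,j)" using a(2) l ij unfolding agree_def by auto
      ultimately show "X $$ (i,l) * Y $$ (l,j) = X' $$ (i,l) * Y' $$ (l,j)" by simp
    qed simp
    show ?thesis using ut_entry[OF u(1,2) ij(1,2)] ut_entry[OF u(3,4) ij(1,2)] s by simp
  qed
  show "agree n d (X*Y) (X'*Y')" unfolding agree_def
  proof (intro allI impI)
    fix i j assume ij: "i < n" "j < n" "j < i + d"
    show "(X*Y)$$(i,j) = (X'*Y')$$(i,j)"
    proof (cases "i < j")
      case True
      have "X$$(i,j) = X'$$(i,j)" "Y$$(i,j) = Y'$$(i,j)" using a ij unfolding agree_def by auto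
      then show ?thesis using core[OF True ij(2)] ij by simp
    next
      case False
      have "ut n (X*Y)" "ut n (X'*Y')" using ut_mult u by auto
      then show ?thesis using False ij unfolding ut_def
        by (cases "i = j") auto
    qed
  qed
  fix i assume "i + d < n" "0 < d"
  then show "(X*Y)$$(i,i+d) - (X'*Y')$$(i,i+d)
        = (X$$(i,i+d) - X'$$(i,i+d)) + (Y$$(i,i+d) - Y'$$(i,i+d))"
    using core[of i "i+d"] by simp
qed

lemma agree_refl: "agree n d X X" unfolding agree_def by auto

lemma ut_pow: assumes "ut n X" shows "ut n (X [^]\<^bsub>Ugroup n m\<^esub> (k::nat))"
  by (induction k) (use ut_one ut_mult assms in auto)

lemma one_pw[simp]: "(1\<^sub>m n) [^]\<^bsub>Ugroup n m\<^esub> (k::nat) = 1\<^sub>m n"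
  by (induction k) auto

lemma pow_diff:
  assumes u: "ut n X" "ut n Y" and a: "agree n d X Y"
  shows "ut n (X [^]\<^bsub>Ugroup n m\<^esub> k) \<and> agree n d (X [^]\<^bsub>Ugroup n m\<^esub> k) (Y [^]\<^bsub>Ugroup n m\<^esub> k)
    \<and> (\<forall>i. i + d < n \<longrightarrow> 0 < d \<longrightarrow> (X [^]\<^bsub>Ugroup n m\<^esub> k)$$(i,i+d) - (Y [^]\<^bsub>Ugroup n m\<^esub> k)$$(i,i+d)
        = of_nat k * (X$$(i,i+d) - Y$$(i,i+d)))"
proof (induction k)
  case 0 then show ?case using ut_one agree_refl by simp
next
  case (Suc k)
  let ?X = "X [^]\<^bsub>Ugroup n m\<^esub> k" and ?Y = "Y [^]\<^bsub>Ugroup n m\<^esub> k"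
  have uY: "ut n ?Y" using ut_pow[OF u(2)] by auto
  have u2: "ut n ?X" "agree n d ?X ?Y" using Suc.IH by auto
  note pd = prod_diff[OF u2(1) u(1) uY u(2) u2(2) a]
  show ?case
  proof (intro conjI allI impI)
    show "ut n (X [^]\<^bsub>Ugroup n m\<^esub> Suc k)" using ut_mult[OF u2(1) u(1)] by simp
    show "agree n d (X [^]\<^bsub>Ugroup n m\<^esub> Suc k) (Y [^]\<^bsub>Ugroup n m\<^esub> Suc k)" using pd(1) by simp
    fix i assume i: "i + d < n" "0 < d"
    show "(X [^]\<^bsub>Ugroup n m\<^esub> Suc k)$$(i,i+d) - (Y [^]\<^bsub>Ugroup n m\<^esub> Suc k)$$(i,i+d)
        = of_nat (Suc k) * (X$$(i,i+d) - Y$$(i,i+d))"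
    proof -
      have e2: "?X$$(i,i+d) - ?Y$$(i,i+d) = of_nat k * (X$$(i,i+d) - Y$$(i,i+d))" using Suc.IH i by blast
      have "(X [^]\<^bsub>Ugroup n m\<^esub> Suc k)$$(i,i+d) - (Y [^]\<^bsub>Ugroup n m\<^esub> Suc k)$$(i,i+d)
         = (?X$$(i,i+d) - ?Y$$(i,i+d)) + (X$$(i,i+d) - Y$$(i,i+d))" using pd(2)[OF i] by simp
      also have "\<dots> = of_nat k * (X$$(i,i+d) - Y$$(i,i+d)) + (X$$(i,i+d) - Y$$(i,i+d))" using e2 by simp
      also have "\<dots> = of_nat (Suc k) * (X$$(i,i+d) - Y$$(i,i+d))" by (simp add: algebra_simps)
      finally show ?thesis .
    qed
  qed
qed

lemma agree_mono: "agree n d X Y \<Longrightarrow> d' \<le> d \<Longrightarrow> agree n d' X Y"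
  unfolding agree_def by force

lemma min_diff: assumes u: "ut n X" "ut n Y" and ne: "X \<noteq> Y"
  shows "\<exists>d>0. agree n d X Y \<and> (\<exists>i. i + d < n \<and> X $$ (i,i+d) \<noteq> Y $$ (i,i+d))"
proof -
  have c: "X \<in> carrier_mat n n" "Y \<in> carrier_mat n n" using u unfolding ut_def by auto
  obtain i j where ij: "i < n" "j < n" "X $$ (i,j) \<noteq> Y $$ (i,j)"
    using ne c by (metis carrier_matD eq_matI)
  have "i < j"
  proof (rule ccontr)
    assume "\<not> i < j"
    then show False using u ij unfolding ut_def by (cases "i = j") auto
  qed
  define P where "P d \<longleftrightarrow> 0 < d \<and> (\<exists>i. i + d < n \<and> X $$ (i,i+d) \<noteq> Y $$ (i,i+d))" for d
  have "P (j - i)" unfolding P_def using \<open>i < j\<close> ij by (intro conjI exI[of _ i]) auto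
  then have Pd: "P (LEAST d. P d)" by (rule LeastI)
  let ?d = "LEAST d. P d"
  have "agree n ?d X Y" unfolding agree_def
  proof (intro allI impI)
    fix a b assume ab: "a < n" "b < n" "b < a + ?d"
    show "X $$ (a,b) = Y $$ (a,b)"
    proof (cases "a < b")
      case True
      show ?thesis
      proof (rule ccontr)
        assume "X $$ (a,b) \<noteq> Y $$ (a,b)"
        then have "P (b - a)" unfolding P_def using True ab by (intro conjI exI[of _ a]) auto
        moreover have "b - a < ?d" using ab True by auto
        ultimately show False using not_less_Least by blast
      qed
    next
      case False
      then show ?thesis using u ab unfolding ut_def by (cases "a = b") auto
    qed
  qed
  then show ?thesis using Pd unfolding P_def by blast
qed

lemma not_agree: assumes u: "ut n X" "ut n Y" and na: "\<not> agree n d X Y"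
  shows "\<exists>d'<d. 0 < d' \<and> agree n d' X Y \<and> (\<exists>i. i + d' < n \<and> X $$ (i,i+d') \<noteq> Y $$ (i,i+d'))"
proof -
  have "X \<noteq> Y" using na agree_refl by auto
  from min_diff[OF u this] obtain d' where d': "0 < d'" "agree n d' X Y"
    "\<exists>i. i + d' < n \<and> X $$ (i,i+d') \<noteq> Y $$ (i,i+d')" by blast
  have "d' < d" using na agree_mono[OF d'(2), of d] by (cases "d' < d") auto
  then show ?thesis using d' by blast
qed

lemma root_unique: assumes u: "ut n X" "ut n Y" and k: "0 < (k::nat)"
  and eq: "X [^]\<^bsub>Ugroup n m\<^esub> k = Y [^]\<^bsub>Ugroup n m\<^esub> k"
  shows "X = Y"
proof (rule ccontr)
  assume "X \<noteq> Y"
  from min_diff[OF u this] obtain d i where d: "0 < d" "agree n d X Y" "i + d < n"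
    "X $$ (i,i+d) \<noteq> Y $$ (i,i+d)" by blast
  from pow_diff[OF u d(2), of m k] d
  have "(X [^]\<^bsub>Ugroup n m\<^esub> k)$$(i,i+d) - (Y [^]\<^bsub>Ugroup n m\<^esub> k)$$(i,i+d)
        = of_nat k * (X$$(i,i+d) - Y$$(i,i+d))" by blast
  then show False using eq k d(4) by simp
qed

lemma root_agree: assumes u: "ut n X" and k: "0 < (k::nat)" and d: "0 < d"
  and a: "agree n d (X [^]\<^bsub>Ugroup n m\<^esub> k) (1\<^sub>m n)"
  shows "agree n d X (1\<^sub>m n) \<and> (\<forall>i. i + d < n \<longrightarrow> (X [^]\<^bsub>Ugroup n m\<^esub> k)$$(i,i+d) = of_nat k * X$$(i,i+d))"
proof -
  have ag: "agree n d X (1\<^sub>m n)"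
  proof (rule ccontr)
    assume "\<not> agree n d X (1\<^sub>m n)"
    from not_agree[OF u ut_one this] obtain d' i where d': "d' < d" "0 < d'" "agree n d' X (1\<^sub>m n)"
      "i + d' < n" "X $$ (i,i+d') \<noteq> (1\<^sub>m n) $$ (i,i+d')" by blast
    from pow_diff[OF u ut_one d'(3), of m k] d'
    have "(X [^]\<^bsub>Ugroup n m\<^esub> k)$$(i,i+d') - (1\<^sub>m n)$$(i,i+d')
        = of_nat k * (X$$(i,i+d') - (1\<^sub>m n)$$(i,i+d'))" by simp
    moreover have "(X [^]\<^bsub>Ugroup n m\<^esub> k)$$(i,i+d') = (1\<^sub>m n)$$(i,i+d')"
      using a d' unfolding agree_def by auto
    ultimately show False using k d'(5) by simp
  qed
  have "(X [^]\<^bsub>Ugroup n m\<^esub> k)$$(i,i+d) = of_nat k * X$$(i,i+d)" if i: "i + d < n" for i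
  proof -
    from pow_diff[OF u ut_one ag, of m k] i d
    have "(X [^]\<^bsub>Ugroup n m\<^esub> k)$$(i,i+d) - (1\<^sub>m n)$$(i,i+d)
        = of_nat k * (X$$(i,i+d) - (1\<^sub>m n)$$(i,i+d))" by simp
    then show ?thesis using i d by simp
  qed
  then show ?thesis using ag by blast
qed

lemma inv_agree: assumes u: "ut n X" "ut n Y" and xy: "X * Y = 1\<^sub>m n" and d: "0 < d"
  and a: "agree n d Y (1\<^sub>m n)"
  shows "agree n d X (1\<^sub>m n) \<and> (\<forall>i. i + d < n \<longrightarrow> X$$(i,i+d) = - Y$$(i,i+d))"
proof -
  have 11: "1\<^sub>m n * 1\<^sub>m n = (1\<^sub>m n :: rat mat)" by simp
  have ag: "agree n d X (1\<^sub>m n)"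
  proof (rule ccontr)
    assume "\<not> agree n d X (1\<^sub>m n)"
    from not_agree[OF u(1) ut_one this] obtain d' i where d': "d' < d" "0 < d'" "agree n d' X (1\<^sub>m n)"
      "i + d' < n" "X $$ (i,i+d') \<noteq> (1\<^sub>m n) $$ (i,i+d')" by blast
    have a': "agree n d' Y (1\<^sub>m n)" using agree_mono[OF a] d' by auto
    have "Y $$ (i,i+d') = 0" using a d' unfolding agree_def by auto
    with prod_diff(2)[OF u ut_one ut_one d'(3) a' d'(4,2)] xy d' show False by simp
  qed
  have "X$$(i,i+d) = - Y$$(i,i+d)" if i: "i + d < n" for i
    using prod_diff(2)[OF u ut_one ut_one ag a i d] xy i d by simp
  then show ?thesis using ag by blast
qed

lemma Unitri_ut: "X \<in> Unitri n m \<Longrightarrow> ut n X"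
  unfolding Unitri_def ut_def by auto

lemma Zinv_one: "1 \<in> Zinv m" using Zinv_int[of 1 m] by simp
lemma Zinv_zero: "0 \<in> Zinv m" using Zinv_int[of 0 m] by simp

lemma Unitri_one: "1\<^sub>m n \<in> Unitri n m"
  unfolding Unitri_def using Zinv_one Zinv_zero by auto

lemma Unitri_mult: assumes m: "m > 0" and X: "X \<in> Unitri n m" and Y: "Y \<in> Unitri n m"
  shows "X * Y \<in> Unitri n m"
proof -
  have u: "ut n (X * Y)" using ut_mult Unitri_ut X Y by blast
  have c: "X \<in> carrier_mat n n" "Y \<in> carrier_mat n n" using X Y unfolding Unitri_def by auto
  have "(X * Y) $$ (i,j) \<in> Zinv m" if "i < n" "j < n" for i j
    unfolding mult_entry[OF c that]
    by (rule Zinv_sum[OF m], rule Zinv_mult, use X Y that in \<open>auto simp: Unitri_def\<close>)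
  then show ?thesis using u unfolding Unitri_def ut_def by auto
qed

lemma Unitri_inv: assumes m: "m > 0" and X: "X \<in> Unitri n m"
  shows "\<exists>Y \<in> Unitri n m. Y * X = 1\<^sub>m n"
proof -
  have u: "ut n X" using Unitri_ut X by auto
  have c: "X \<in> carrier_mat n n" using X unfolding Unitri_def by auto
  have "upper_triangular X" using u c unfolding upper_triangular_def ut_def by auto
  then have "det X = prod_list (diag_mat X)" using det_upper_triangular c by blast
  also have "diag_mat X = map (\<lambda>i. 1) [0..<n]" using u c unfolding diag_mat_def ut_def by auto
  also have "prod_list (map (\<lambda>i. 1::rat) [0..<n]) = 1" by (induction n) auto
  finally have "det X \<noteq> 0" by simp
  from det_non_zero_imp_unit[OF c this, of "()"]
  obtain Y where Y: "Y \<in> carrier_mat n n" "X * Y = 1\<^sub>m n" "Y * X = 1\<^sub>m n"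
    unfolding Units_def ring_mat_simps by auto
  have key: "Y $$ (i,j) = (if i = j then 1 else 0) - (\<Sum>l\<in>{i<..<n}. X $$ (i,l) * Y $$ (l,j))"
    if ij: "i < n" "j < n" for i j
  proof -
    have "(if i = j then 1 else 0) = (X * Y) $$ (i,j)" using Y(2) ij by simp
    also have "\<dots> = (\<Sum>l<n. X $$ (i,l) * Y $$ (l,j))" using mult_entry[OF c Y(1) ij] .
    also have "\<dots> = (\<Sum>l\<in>{i..<n}. X $$ (i,l) * Y $$ (l,j))"
      by (rule sum.mono_neutral_right, use u ij in \<open>auto simp: ut_def\<close>)
    also have "{i..<n} = insert i {i<..<n}" using ij by auto
    also have "(\<Sum>l\<in>insert i {i<..<n}. X $$ (i,l) * Y $$ (l,j))
        = Y $$ (i,j) + (\<Sum>l\<in>{i<..<n}. X $$ (i,l) * Y $$ (l,j))"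
      using u ij by (simp add: ut_def)
    finally show ?thesis by simp
  qed
  have Q: "\<forall>i. i < n \<longrightarrow> n - i \<le> t \<longrightarrow>
      Y $$ (i,j) \<in> Zinv m \<and> (j \<le> i \<longrightarrow> Y $$ (i,j) = (if i = j then 1 else 0))"
    if j: "j < n" for j t
  proof (induction t)
    case 0 then show ?case by auto
  next
    case (Suc t)
    show ?case
    proof (intro allI impI)
      fix i assume i: "i < n" "n - i \<le> Suc t"
      have IH: "Y $$ (l,j) \<in> Zinv m \<and> (j \<le> l \<longrightarrow> Y $$ (l,j) = (if l = j then 1 else 0))"
        if "l \<in> {i<..<n}" for l using Suc.IH that i by auto
      have z: "Y $$ (i,j) \<in> Zinv m"
        unfolding key[OF i(1) j]
        by (rule Zinv_diff[OF m], use Zinv_one Zinv_zero in simp,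
            rule Zinv_sum[OF m], rule Zinv_mult, use X i IH in \<open>auto simp: Unitri_def\<close>)
      have "j \<le> i \<longrightarrow> Y $$ (i,j) = (if i = j then 1 else 0)"
      proof
        assume ji: "j \<le> i"
        have "(\<Sum>l\<in>{i<..<n}. X $$ (i,l) * Y $$ (l,j)) = 0"
          by (rule sum.neutral, use IH ji in auto)
        then show "Y $$ (i,j) = (if i = j then 1 else 0)" using key[OF i(1) j] by simp
      qed
      then show "Y $$ (i,j) \<in> Zinv m \<and> (j \<le> i \<longrightarrow> Y $$ (i,j) = (if i = j then 1 else 0))"
        using z by blast
    qed
  qed
  have "Y \<in> Unitri n m" unfolding Unitri_def
    using Q[of _ n] Y(1) by auto
  then show ?thesis using Y(3) by blast
qed

lemma Ugroup_group: assumes m: "m > 0" shows "group (Ugroup n m)"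
proof (rule groupI)
  show "\<one>\<^bsub>Ugroup n m\<^esub> \<in> carrier (Ugroup n m)" using Unitri_one by simp
  fix x assume x: "x \<in> carrier (Ugroup n m)"
  then have xc: "x \<in> carrier_mat n n" by (simp add: Unitri_def)
  show "\<one>\<^bsub>Ugroup n m\<^esub> \<otimes>\<^bsub>Ugroup n m\<^esub> x = x" using xc by simp
  show "\<exists>y\<in>carrier (Ugroup n m). y \<otimes>\<^bsub>Ugroup n m\<^esub> x = \<one>\<^bsub>Ugroup n m\<^esub>"
    using Unitri_inv[OF m] x by simp
  fix y assume y: "y \<in> carrier (Ugroup n m)"
  show "x \<otimes>\<^bsub>Ugroup n m\<^esub> y \<in> carrier (Ugroup n m)" using Unitri_mult[OF m] x y by simp
  fix z assume z: "z \<in> carrier (Ugroup n m)"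
  show "x \<otimes>\<^bsub>Ugroup n m\<^esub> y \<otimes>\<^bsub>Ugroup n m\<^esub> z = x \<otimes>\<^bsub>Ugroup n m\<^esub> (y \<otimes>\<^bsub>Ugroup n m\<^esub> z)"
    using x y z assoc_mult_mat[of x n n y n z n] by (simp add: Unitri_def)
qed

lemma (in group) conj_pow:
  assumes a: "a \<in> carrier G" and b: "b \<in> carrier G"
  shows "(b \<otimes> a \<otimes> inv b) [^] (k::nat) = b \<otimes> a [^] k \<otimes> inv b"
proof (induction k)
  case 0 then show ?case using b by simp
next
  case (Suc k)
  have "(b \<otimes> a \<otimes> inv b) [^] Suc k = (b \<otimes> a [^] k \<otimes> inv b) \<otimes> (b \<otimes> a \<otimes> inv b)"
    using Suc by simp
  also have "\<dots> = b \<otimes> (a [^] k \<otimes> (inv b \<otimes> b) \<otimes> a) \<otimes> inv b"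
  proof -
    have aux: "inv b \<otimes> (b \<otimes> x) = x" if "x \<in> carrier G" for x
      using that b by (metis l_inv l_one m_assoc inv_closed)
    show ?thesis using a b by (simp add: m_assoc aux)
  qed
  also have "\<dots> = b \<otimes> a [^] Suc k \<otimes> inv b" using a b by simp
  finally show ?case .
qed

lemma comm_root: assumes m: "m > 0" and a: "a \<in> Unitri n m" and b: "b \<in> Unitri n m"
  and k: "0 < (k::nat)"
  and c: "a [^]\<^bsub>Ugroup n m\<^esub> k * b = b * a [^]\<^bsub>Ugroup n m\<^esub> k"
  shows "a * b = b * a"
proof -
  interpret G: group "Ugroup n m" using Ugroup_group[OF m] .
  have a': "a \<in> carrier (Ugroup n m)" and b': "b \<in> carrier (Ugroup n m)" using a b by auto
  let ?c = "b \<otimes>\<^bsub>Ugroup n m\<^esub> a \<otimes>\<^bsub>Ugroup n m\<^esub> inv\<^bsub>Ugroup n m\<^esub> b"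
  have cc: "?c \<in> Unitri n m" using a' b' by (metis G.inv_closed G.m_closed Ugroup_carrier)
  have "?c [^]\<^bsub>Ugroup n m\<^esub> k = b \<otimes>\<^bsub>Ugroup n m\<^esub> a [^]\<^bsub>Ugroup n m\<^esub> k \<otimes>\<^bsub>Ugroup n m\<^esub> inv\<^bsub>Ugroup n m\<^esub> b"
    using G.conj_pow[OF a' b'] .
  also have "\<dots> = a [^]\<^bsub>Ugroup n m\<^esub> k \<otimes>\<^bsub>Ugroup n m\<^esub> b \<otimes>\<^bsub>Ugroup n m\<^esub> inv\<^bsub>Ugroup n m\<^esub> b"
    using c by simp
  also have "\<dots> = a [^]\<^bsub>Ugroup n m\<^esub> k" using a' b'
    by (metis G.m_assoc G.r_inv G.r_one G.inv_closed G.nat_pow_closed)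
  finally have "?c = a" using root_unique[OF Unitri_ut[OF cc] Unitri_ut[OF a] k] by blast
  then have "?c \<otimes>\<^bsub>Ugroup n m\<^esub> b = a \<otimes>\<^bsub>Ugroup n m\<^esub> b" by simp
  then have "b \<otimes>\<^bsub>Ugroup n m\<^esub> a = a \<otimes>\<^bsub>Ugroup n m\<^esub> b" using a' b'
    by (metis G.m_assoc G.l_inv G.r_one G.inv_closed G.m_closed)
  then show ?thesis by simp
qed

lemma Zadd_simps[simp]: "carrier (Zadd m) = Zinv m" "x \<otimes>\<^bsub>Zadd m\<^esub> y = x + y"
  by (simp_all add: Zadd_def)

lemma hom_facts:
  assumes m: "m > 0" and h: "\<alpha> \<in> hom (Zadd m) (Ugroup n m)"
  shows "\<And>x. x \<in> Zinv m \<Longrightarrow> \<alpha> x \<in> Unitri n m"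
    and "\<And>x y. x \<in> Zinv m \<Longrightarrow> y \<in> Zinv m \<Longrightarrow> \<alpha> (x + y) = \<alpha> x * \<alpha> y"
    and "\<alpha> 0 = 1\<^sub>m n"
    and "\<And>x. x \<in> Zinv m \<Longrightarrow> \<alpha> x * \<alpha> (- x) = 1\<^sub>m n"
    and "\<And>x. x \<in> Zinv m \<Longrightarrow> \<alpha> (of_nat k * x) = \<alpha> x [^]\<^bsub>Ugroup n m\<^esub> k"
proof -
  interpret G: group "Ugroup n m" using Ugroup_group[OF m] .
  show c: "\<And>x. x \<in> Zinv m \<Longrightarrow> \<alpha> x \<in> Unitri n m" using h unfolding hom_def by auto
  show ad: "\<And>x y. x \<in> Zinv m \<Longrightarrow> y \<in> Zinv m \<Longrightarrow> \<alpha> (x + y) = \<alpha> x * \<alpha> y"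
    using h unfolding hom_def by auto
  have z: "0 \<in> Zinv m" by (rule Zinv_zero)
  have "\<alpha> 0 * 1\<^sub>m n = \<alpha> 0" using c[OF z] right_mult_one_mat[of "\<alpha> 0" n n] by (simp add: Unitri_def)
  then have "\<alpha> 0 * \<alpha> 0 = \<alpha> 0 * 1\<^sub>m n" using ad[OF z z] by simp
  then show z1: "\<alpha> 0 = 1\<^sub>m n" using G.Units_l_cancel[of "\<alpha> 0" "\<alpha> 0" "1\<^sub>m n"] G.Units_eq c[OF z] Unitri_one by simp
  show "\<And>x. x \<in> Zinv m \<Longrightarrow> \<alpha> x * \<alpha> (- x) = 1\<^sub>m n"
    using ad Zinv_uminus z1 by (metis add.right_inverse)
  show "\<And>x. x \<in> Zinv m \<Longrightarrow> \<alpha> (of_nat k * x) = \<alpha> x [^]\<^bsub>Ugroup n m\<^esub> k"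
  proof (induction k)
    case 0 then show ?case using z1 by simp
  next
    case (Suc k)
    have "of_nat k * x \<in> Zinv m" using Zinv_mult[OF Zinv_int[of "int k"] Suc.prems] by simp
    then have "\<alpha> (of_nat k * x + x) = \<alpha> (of_nat k * x) * \<alpha> x" using ad Suc.prems by blast
    then show ?case using Suc by (simp add: algebra_simps)
  qed
qed

lemma iso_elim: assumes "g \<in> isolator n m H" "H = \<alpha> ` Zinv m"
  obtains k q where "0 < k" "q \<in> Zinv m" "g [^]\<^bsub>Ugroup n m\<^esub> (k::nat) = \<alpha> q" "g \<in> Unitri n m"
  using assms unfolding isolator_def by (auto simp: Suc_le_eq)

theorem lemma4p3:
  fixes m n :: nat and \<alpha> :: "rat \<Rightarrow> rat mat" and H :: "rat mat set"
  assumes "m \<ge> 2" and "n \<ge> 1"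
    and "\<alpha> \<in> hom (Zadd m) (Ugroup n m)"
    and "inj_on \<alpha> (Zinv m)"
    and "H = \<alpha> ` Zinv m"
  shows "subgroup (isolator n m H) (Ugroup n m)
     \<and> (\<forall>x \<in> isolator n m H. \<forall>y \<in> isolator n m H. x * y = y * x)
     \<and> (\<exists>e::nat. e \<ge> 1 \<and> (\<forall>g \<in> isolator n m H. g [^]\<^bsub>Ugroup n m\<^esub> e \<in> H))"
proof -
  have m: "m > 0" using assms(1) by auto
  interpret G: group "Ugroup n m" using Ugroup_group[OF m] .
  note hf = hom_facts[OF m assms(3)]
  have HI: "H = \<alpha> ` Zinv m" by (rule assms(5))
  have comm: "x * y = y * x" if x: "x \<in> isolator n m H" and y: "y \<in> isolator n m H" for x y
  proof -
    obtain k :: nat and q where kq: "0 < k" "q \<in> Zinv m" "x [^]\<^bsub>Ugroup n m\<^esub> k = \<alpha> q" "x \<in> Unitri n m"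
      by (rule iso_elim[OF x HI])
    obtain l :: nat and r where lr: "0 < l" "r \<in> Zinv m" "y [^]\<^bsub>Ugroup n m\<^esub> l = \<alpha> r" "y \<in> Unitri n m"
      by (rule iso_elim[OF y HI])
    have "\<alpha> q * \<alpha> r = \<alpha> r * \<alpha> q" using hf(2)[OF kq(2) lr(2)] hf(2)[OF lr(2) kq(2)] by (simp add: add.commute)
    then have "y [^]\<^bsub>Ugroup n m\<^esub> l * x [^]\<^bsub>Ugroup n m\<^esub> k = x [^]\<^bsub>Ugroup n m\<^esub> k * y [^]\<^bsub>Ugroup n m\<^esub> l"
      using kq lr by simp
    from comm_root[OF m lr(4) _ lr(1) this] have "y * x [^]\<^bsub>Ugroup n m\<^esub> k = x [^]\<^bsub>Ugroup n m\<^esub> k * y"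
      using G.nat_pow_closed[of x k] kq(4) by simp
    from comm_root[OF m kq(4) lr(4) kq(1)] this show ?thesis by simp
  qed
  have sub: "subgroup (isolator n m H) (Ugroup n m)"
  proof (rule G.subgroupI)
    show "isolator n m H \<subseteq> carrier (Ugroup n m)" unfolding isolator_def by auto
    have "\<alpha> 0 \<in> H" using HI Zinv_zero by simp
    then have "1\<^sub>m n \<in> H" using hf(3) by simp
    then have "(1\<^sub>m n) [^]\<^bsub>Ugroup n m\<^esub> (1::nat) \<in> H" by (simp only: one_pw)
    then have "1\<^sub>m n \<in> isolator n m H" unfolding isolator_def using Unitri_one by blast
    then show "isolator n m H \<noteq> {}" by auto
  next
    fix a assume a: "a \<in> isolator n m H"
    obtain k :: nat and q where kq: "0 < k" "q \<in> Zinv m" "a [^]\<^bsub>Ugroup n m\<^esub> k = \<alpha> q" "a \<in> Unitri n m"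
      by (rule iso_elim[OF a HI])
    have ac: "a \<in> carrier (Ugroup n m)" using kq by simp
    have "inv\<^bsub>Ugroup n m\<^esub> (\<alpha> q) = \<alpha> (- q)"
      by (rule G.inv_equality, use hf(4)[OF Zinv_uminus[OF kq(2)]] hf(1) kq(2) Zinv_uminus in auto)
    then have "(inv\<^bsub>Ugroup n m\<^esub> a) [^]\<^bsub>Ugroup n m\<^esub> k = \<alpha> (- q)"
      using G.nat_pow_inv[OF ac, of k] kq by simp
    moreover have "inv\<^bsub>Ugroup n m\<^esub> a \<in> Unitri n m" using G.inv_closed[OF ac] by simp
    moreover have "\<alpha> (- q) \<in> H" using HI Zinv_uminus[OF kq(2)] by simp
    moreover have "1 \<le> k" using kq(1) by simp
    ultimately show "inv\<^bsub>Ugroup n m\<^esub> a \<in> isolator n m H" unfolding isolator_def by auto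
  next
    fix a b assume a: "a \<in> isolator n m H" and b: "b \<in> isolator n m H"
    obtain k :: nat and q where kq: "0 < k" "q \<in> Zinv m" "a [^]\<^bsub>Ugroup n m\<^esub> k = \<alpha> q" "a \<in> Unitri n m"
      by (rule iso_elim[OF a HI])
    obtain l :: nat and r where lr: "0 < l" "r \<in> Zinv m" "b [^]\<^bsub>Ugroup n m\<^esub> l = \<alpha> r" "b \<in> Unitri n m"
      by (rule iso_elim[OF b HI])
    have ac: "a \<in> carrier (Ugroup n m)" "b \<in> carrier (Ugroup n m)" using kq lr by auto
    have ab: "a \<otimes>\<^bsub>Ugroup n m\<^esub> b = b \<otimes>\<^bsub>Ugroup n m\<^esub> a" using comm[OF a b] by simp
    have zq: "of_nat l * q \<in> Zinv m" "of_nat k * r \<in> Zinv m"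
      using Zinv_mult[OF Zinv_int[of "int l"] kq(2)] Zinv_mult[OF Zinv_int[of "int k"] lr(2)] by auto
    have "(a \<otimes>\<^bsub>Ugroup n m\<^esub> b) [^]\<^bsub>Ugroup n m\<^esub> (k * l)
        = a [^]\<^bsub>Ugroup n m\<^esub> (k * l) \<otimes>\<^bsub>Ugroup n m\<^esub> b [^]\<^bsub>Ugroup n m\<^esub> (k * l)"
      using G.pow_mult_distrib[OF ab ac] .
    also have "a [^]\<^bsub>Ugroup n m\<^esub> (k * l) = \<alpha> (of_nat l * q)"
      using G.nat_pow_pow[OF ac(1), of k l] kq hf(5)[OF kq(2)] by simp
    also have "b [^]\<^bsub>Ugroup n m\<^esub> (k * l) = \<alpha> (of_nat k * r)"
      using G.nat_pow_pow[OF ac(2), of l k] lr hf(5)[OF lr(2)] by (simp add: mult.commute)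
    finally have "(a \<otimes>\<^bsub>Ugroup n m\<^esub> b) [^]\<^bsub>Ugroup n m\<^esub> (k * l) = \<alpha> (of_nat l * q + of_nat k * r)"
      using hf(2)[OF zq] by simp
    moreover have "a \<otimes>\<^bsub>Ugroup n m\<^esub> b \<in> Unitri n m" using G.m_closed[OF ac] by simp
    moreover have "of_nat l * q + of_nat k * r \<in> Zinv m" using Zinv_add[OF m zq] .
    moreover have "1 \<le> k * l" using kq(1) lr(1) by (simp add: Suc_le_eq)
    ultimately show "a \<otimes>\<^bsub>Ugroup n m\<^esub> b \<in> isolator n m H" unfolding isolator_def HI by blast
  qed
  have z: "0 \<in> Zinv m" "1 \<in> Zinv m" using Zinv_zero Zinv_one by auto
  define A where "A = \<alpha> 1"
  have AU: "A \<in> Unitri n m" using hf(1)[OF z(2)] A_def by simp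
  have "A \<noteq> 1\<^sub>m n"
  proof
    assume "A = 1\<^sub>m n"
    then have "\<alpha> 1 = \<alpha> 0" using hf(3) A_def by simp
    then have "(1::rat) = 0" using inj_onD[OF assms(4) _ z(2) z(1)] by blast
    then show False by simp
  qed
  from min_diff[OF Unitri_ut[OF AU] ut_one this] obtain d i0 where
    d: "0 < d" "agree n d A (1\<^sub>m n)" "i0 + d < n" "A $$ (i0,i0+d) \<noteq> (1\<^sub>m n) $$ (i0,i0+d)" by blast
  define c where "c = A $$ (i0,i0+d)"
  have c0: "c \<noteq> 0" using d unfolding c_def by simp
  have P: "agree n d (\<alpha> q) (1\<^sub>m n) \<and> (\<alpha> q) $$ (i0,i0+d) = q * c" if q: "q \<in> Zinv m" for q
  proof -
    obtain a j where qa: "q = of_int a / of_nat m ^ j" using q unfolding Zinv_def by auto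
    define u where "u = 1 / (of_nat m ^ j :: rat)"
    have uZ: "u \<in> Zinv m" unfolding u_def by (rule Zinv_inv_pow)
    define B where "B = \<alpha> u"
    have BU: "B \<in> Unitri n m" using hf(1)[OF uZ] B_def by simp
    have mj: "(of_nat (m ^ j) :: rat) \<noteq> 0" using m by simp
    have "B [^]\<^bsub>Ugroup n m\<^esub> (m ^ j) = \<alpha> (of_nat (m ^ j) * u)"
      unfolding B_def by (rule hf(5)[OF uZ, symmetric])
    also have "of_nat (m ^ j) * u = 1" unfolding u_def using mj by simp
    finally have BA: "B [^]\<^bsub>Ugroup n m\<^esub> (m ^ j) = A" unfolding A_def .
    have mj0: "0 < m ^ j" using m by simp
    have "agree n d (B [^]\<^bsub>Ugroup n m\<^esub> (m ^ j)) (1\<^sub>m n)" using BA d(2) by simp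
    from root_agree[OF Unitri_ut[OF BU] mj0 d(1) this] d(3) BA
    have Bag: "agree n d B (1\<^sub>m n)" and Be: "c = of_nat (m ^ j) * B $$ (i0,i0+d)"
      unfolding c_def by auto
    have Pn: "agree n d (\<alpha> (of_nat t * u)) (1\<^sub>m n) \<and> (\<alpha> (of_nat t * u)) $$ (i0,i0+d) = (of_nat t * u) * c"
      for t
    proof -
      have e: "\<alpha> (of_nat t * u) = B [^]\<^bsub>Ugroup n m\<^esub> t" using hf(5)[OF uZ] B_def by simp
      from pow_diff[OF Unitri_ut[OF BU] ut_one Bag, of m t] d
      have "agree n d (B [^]\<^bsub>Ugroup n m\<^esub> t) (1\<^sub>m n)"
        "(B [^]\<^bsub>Ugroup n m\<^esub> t) $$ (i0,i0+d) = of_nat t * B $$ (i0,i0+d)" by auto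
      moreover have "of_nat t * B $$ (i0,i0+d) = (of_nat t * u) * c"
        unfolding Be u_def using mj m by (simp add: field_simps)
      ultimately show ?thesis using e by simp
    qed
    show ?thesis
    proof (cases "a \<ge> 0")
      case True
      have "q = of_nat (nat a) * u" unfolding qa u_def using True by simp
      then show ?thesis using Pn by simp
    next
      case False
      have q': "- q = of_nat (nat (- a)) * u" unfolding qa u_def using False by simp
      have "-q \<in> Zinv m" using Zinv_uminus[OF q] .
      have P': "agree n d (\<alpha> (-q)) (1\<^sub>m n) \<and> (\<alpha> (-q)) $$ (i0,i0+d) = (-q) * c"
        using Pn[of "nat (-a)"] q' by simp
      from inv_agree[OF Unitri_ut[OF hf(1)[OF q]] Unitri_ut[OF hf(1)[OF Zinv_uminus[OF q]]] hf(4)[OF q] d(1)]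
        P' d(3) show ?thesis by auto
    qed
  qed
  obtain p r where pr: "quotient_of c = (p, r)" by (cases "quotient_of c")
  have cpr: "c = of_int p / of_int r" using quotient_of_div[OF pr] .
  have r0: "r > 0" using quotient_of_denom_pos[OF pr] .
  have p0: "p \<noteq> 0" using c0 cpr by auto
  define e where "e = nat \<bar>p\<bar>"
  have e1: "e \<ge> 1" using p0 unfolding e_def by simp
  have expo: "g [^]\<^bsub>Ugroup n m\<^esub> e \<in> H" if g: "g \<in> isolator n m H" for g
  proof -
    obtain k :: nat and q where kq: "0 < k" "q \<in> Zinv m" "g [^]\<^bsub>Ugroup n m\<^esub> k = \<alpha> q" "g \<in> Unitri n m"
      by (rule iso_elim[OF g HI])
    have gc: "g \<in> carrier (Ugroup n m)" using kq by simp
    from P[OF kq(2)] kq(3) have "agree n d (g [^]\<^bsub>Ugroup n m\<^esub> k) (1\<^sub>m n)" by simp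
    from root_agree[OF Unitri_ut[OF kq(4)] kq(1) d(1) this] d(3) P[OF kq(2)] kq(3)
    have ge: "q * c = of_nat k * g $$ (i0,i0+d)" by auto
    have gZ: "g $$ (i0,i0+d) \<in> Zinv m" using kq(4) d(3) unfolding Unitri_def by auto
    define s where "s = q / of_nat k"
    have k0: "(of_nat k :: rat) \<noteq> 0" using kq(1) by simp
    have gs: "g $$ (i0,i0+d) = s * c" unfolding s_def using ge k0 by (simp add: field_simps)
    define t where "t = of_nat e * s"
    have t: "t = of_int (sgn p * r) * g $$ (i0,i0+d)"
    proof -
      have "of_int \<bar>p\<bar> = (of_int (sgn p) * of_int p :: rat)" by (simp add: abs_sgn)
      moreover have "(of_nat e :: rat) = of_int \<bar>p\<bar>" unfolding e_def by simp
      moreover have "(of_int r :: rat) \<noteq> 0" using r0 by simp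
      ultimately show ?thesis unfolding t_def gs cpr by (simp add: field_simps)
    qed
    have tZ: "t \<in> Zinv m" unfolding t using Zinv_mult[OF Zinv_int gZ] .
    have "(g [^]\<^bsub>Ugroup n m\<^esub> e) [^]\<^bsub>Ugroup n m\<^esub> k = (g [^]\<^bsub>Ugroup n m\<^esub> k) [^]\<^bsub>Ugroup n m\<^esub> e"
      using G.nat_pow_pow[OF gc, of e k] G.nat_pow_pow[OF gc, of k e] by (simp add: mult.commute)
    also have "\<dots> = \<alpha> (of_nat e * q)" using kq hf(5)[OF kq(2)] by simp
    also have "of_nat e * q = of_nat k * t" unfolding t_def s_def using k0 by simp
    also have "\<alpha> (of_nat k * t) = (\<alpha> t) [^]\<^bsub>Ugroup n m\<^esub> k" using hf(5)[OF tZ] .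
    finally have "g [^]\<^bsub>Ugroup n m\<^esub> e = \<alpha> t"
      using root_unique[OF Unitri_ut Unitri_ut kq(1)] G.nat_pow_closed[OF gc, of e] hf(1)[OF tZ]
      by simp
    then show ?thesis using tZ HI by simp
  qed
  show ?thesis using sub comm expo e1 by blast
qed

end
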